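(* The maps $\mu^\bullet X$ do not satisfy the monad associativity law on the whole capacity functor: there exist a compactum $X$ and a capacity $\gimel\in M(M(MX))$ such that $$\mu^\bullet X\circ \mu^\bullet (MX)(\gimel)\neq \mu^\bullet X\circ M(\mu^\bullet X)(\gimel).$$ (In fact one can take $X=\{a,b\}$ to be the two-point discrete space; the two sides then differ on the closed set $\{a\}$.)
   Context: A compactum is a compact Hausdorff space; $I=[0,1]$; $\mathcal F(X)$ denotes the family of closed subsets of $X$. An (upper-semicontinuous) capacity on a compactum $X$ is a function $\nu:\mathcal F(X)\to I$ such that: (1) $\nu(X)=1$, $\nu(\emptyset)=0$; (2) if $F\subset G$ then $\nu(F)\le\nu(G)$; (3) if $\nu(F)<a$ then there is an open set $O\supset F$ with $\nu(B)<a$ for every closed $B\subset O$. For open $U\subset X$ one puts $\nu(U)=\sup\{\nu(K): K\text{ closed},\ K\subset U\}$. $MX$ is the set of all capacities on $X$, topologized by the subbase consisting of the sets $\{c\in MX: c(F)<a\}$ ($F$ closed, $a\in I$) and $\{c\in MX: c(U)>a\}$ ($U$ open, $a\in I$); with this topology $MX$ is a compactum. For a continuous map $f:X\to Y$ of compacta, $Mf:MX\to MY$ is $Mf(c)(F)=c(f^{-1}(F))$. For a closed $F\subset X$ and $t\in I$ put $F_t=\{c\in MX: c(F)\ge t\}$, a closed subset of $MX$. The map $\mu^\bullet X: M(MX)\to MX$ is defined by $\mu^\bullet X(\mathcal C)(F)=\max\{\mathcal C(F_t)\cdot t: t\in(0,1]\}$ for $\mathcal C\in M(MX)$ and closed $F\subset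 X$ (the maximum exists). *)

theory Defs
  imports "HOL-Analysis.Analysis"
begin

definition compactum :: "'a topology \<Rightarrow> bool" where
  "compactum X \<longleftrightarrow> compact_space X \<and> Hausdorff_space X"

text \<open>Capacities on X, represented as functions on subsets of the carrier that are
  meaningful on closed sets only; normalised to 0 on non-closed sets so that
  every capacity has a unique representative.\<close>
definition capacity :: "'a topology \<Rightarrow> ('a set \<Rightarrow> real) \<Rightarrow> bool" where
  "capacity X c \<longleftrightarrow>
     (\<forall>S. \<not> closedin X S \<longrightarrow> c S = 0) \<and>
     (\<forall>F. closedin X F \<longrightarrow> 0 \<le> c F \<and> c F \<le> 1) \<and>
     c (topspace X) = 1 \<and> c {} = 0 \<and>
     (\<forall>F G. closedin X F \<and> closedin X G \<and> F \<subseteq> G \<longrightarrow> c F \<le> c G) \<and>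
     (\<forall>F a. closedin X F \<and> c F < a \<longrightarrow>
        (\<exists>W. openin X W \<and> F \<subseteq> W \<and> (\<forall>B. closedin X B \<and> B \<subseteq> W \<longrightarrow> c B < a)))"

definition caps :: "'a topology \<Rightarrow> ('a set \<Rightarrow> real) set" where
  "caps X = {c. capacity X c}"

definition cap_open :: "'a topology \<Rightarrow> ('a set \<Rightarrow> real) \<Rightarrow> 'a set \<Rightarrow> real" where
  "cap_open X c U = Sup {c K | K. closedin X K \<and> K \<subseteq> U}"

definition cap_top :: "'a topology \<Rightarrow> ('a set \<Rightarrow> real) topology" where
  "cap_top X = topology_generated_by
     ({caps X} \<union>
      {{c \<in> caps X. c F < a} | F a. closedin X F \<and> 0 \<le> a \<and> a \<le> 1} \<union>
      {{c \<in> caps X. cap_open X c U > a} | U a. openin X U \<and> 0 \<le> a \<and> a \<le> 1})"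

definition cap_map :: "'a topology \<Rightarrow> 'b topology \<Rightarrow> ('a \<Rightarrow> 'b) \<Rightarrow> ('a set \<Rightarrow> real) \<Rightarrow> ('b set \<Rightarrow> real)" where
  "cap_map X Y f c = (\<lambda>F. if closedin Y F then c (f -` F \<inter> topspace X) else 0)"

definition cap_level :: "'a topology \<Rightarrow> 'a set \<Rightarrow> real \<Rightarrow> ('a set \<Rightarrow> real) set" where
  "cap_level X F t = {c \<in> caps X. c F \<ge> t}"

text \<open>The map mu-bullet X from M(MX) to MX (the max exists, so it equals the sup).\<close>
definition mu_bullet :: "'a topology \<Rightarrow> (('a set \<Rightarrow> real) set \<Rightarrow> real) \<Rightarrow> ('a set \<Rightarrow> real)" where
  "mu_bullet X C = (\<lambda>F. if closedin X F
      then Sup {C (cap_level X F t) * t | t. t \<in> {0<..1}} else 0)"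

end

theory Submission
  imports Defs
begin


lemma topspace_cap_top[simp]: "topspace (cap_top Y) = caps Y"
  unfolding cap_top_def by auto

lemma open_lt:
  assumes "closedin Y F" "0 \<le> a" "a \<le> 1"
  shows "openin (cap_top Y) {c \<in> caps Y. c F < a}"
  unfolding cap_top_def by (rule topology_generated_by_Basis) (use assms in blast)

lemma open_gt:
  assumes "openin Y U" "0 \<le> a" "a \<le> 1"
  shows "openin (cap_top Y) {c \<in> caps Y. cap_open Y c U > a}"
  unfolding cap_top_def by (rule topology_generated_by_Basis) (use assms in blast)

lemma open_caps: "openin (cap_top Y) (caps Y)"
  using openin_topspace[of "cap_top Y"] by simp

lemma level_closed:
  assumes "closedin Y F" "0 \<le> t" "t \<le> 1"
  shows "closedin (cap_top Y) (cap_level Y F t)"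
proof -
  have "caps Y - cap_level Y F t = {c \<in> caps Y. c F < t}"
    unfolding cap_level_def by auto
  then show ?thesis using open_lt[OF assms] unfolding closedin_def cap_level_def by auto
qed

lemma capD:
  assumes "c \<in> caps Y"
  shows "\<And>S. \<not> closedin Y S \<Longrightarrow> c S = 0"
    "\<And>F. closedin Y F \<Longrightarrow> 0 \<le> c F" "\<And>F. closedin Y F \<Longrightarrow> c F \<le> 1"
    "c (topspace Y) = 1" "c {} = 0"
    "\<And>F G. closedin Y F \<Longrightarrow> closedin Y G \<Longrightarrow> F \<subseteq> G \<Longrightarrow> c F \<le> c G"
    "\<And>F a. closedin Y F \<Longrightarrow> c F < a \<Longrightarrow>
        (\<exists>W. openin Y W \<and> F \<subseteq> W \<and> (\<forall>B. closedin Y B \<and> B \<subseteq> W \<longrightarrow> c B < a))"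
  using assms unfolding caps_def capacity_def by auto

lemma cap_le1: "c \<in> caps Y \<Longrightarrow> c S \<le> 1"
  by (metis capD(1,3) zero_le_one)
lemma cap_ge0: "c \<in> caps Y \<Longrightarrow> 0 \<le> c S"
  by (metis capD(1,2) order_refl)

lemma singleton_closed:
  assumes "c \<in> caps Y"
  shows "closedin (cap_top Y) {c}"
proof -
  have "openin (cap_top Y) (caps Y - {c})"
  proof (subst openin_subopen, intro ballI)
    fix d assume d: "d \<in> caps Y - {c}"
    then have "d \<noteq> c" by auto
    then obtain S where S: "d S \<noteq> c S" by auto
    have cS: "closedin Y S"
      using S capD(1)[OF assms] capD(1)[of d] d by force
    show "\<exists>T. openin (cap_top Y) T \<and> d \<in> T \<and> T \<subseteq> caps Y - {c}"
    proof (cases "d S < c S")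
      case True
      define a where "a = (d S + c S) / 2"
      have "0 \<le> d S" "c S \<le> 1" using cap_ge0[of d Y S] cap_le1[of c Y S] assms d by auto
      then have "0 \<le> a" "a \<le> 1" using True unfolding a_def by auto
      then show ?thesis
        by (intro exI[of _ "{e \<in> caps Y. e S < a}"]) (use open_lt[OF cS \<open>0 \<le> a\<close> \<open>a \<le> 1\<close>] True d in \<open>auto simp: a_def\<close>)
    next
      case False
      then have lt: "c S < d S" using S by auto
      define a1 where "a1 = (2 * c S + d S) / 3"
      define a2 where "a2 = (c S + 2 * d S) / 3"
      have "c S < a1" "a1 < a2" "a2 < d S" using lt unfolding a1_def a2_def by auto
      obtain W where W: "openin Y W" "S \<subseteq> W" "\<forall>B. closedin Y B \<and> B \<subseteq> W \<longrightarrow> c B < a1"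
        using capD(7)[OF assms cS \<open>c S < a1\<close>] by blast
      have ne: "{c K | K. closedin Y K \<and> K \<subseteq> W} \<noteq> {}" by auto
      have "cap_open Y c W \<le> a1"
        unfolding cap_open_def by (rule cSup_least[OF ne]) (use W in force)
      moreover have "cap_open Y d W \<ge> d S"
        unfolding cap_open_def
        by (rule cSup_upper) (use cS W cap_le1[of d] d in \<open>auto intro!: bdd_aboveI[of _ 1]\<close>)
      moreover have "0 \<le> c S" "d S \<le> 1" using cap_ge0[of c Y S] cap_le1[of d Y S] assms d by auto
      moreover have "0 \<le> a2" "a2 \<le> 1" using calculation(3,4) lt
        unfolding a2_def by auto
      ultimately show ?thesis using \<open>a1 < a2\<close> \<open>a2 < d S\<close> d
        by (intro exI[of _ "{e \<in> caps Y. cap_open Y e W > a2}"]) (use open_gt[OF W(1)] in auto)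
    qed
  qed
  then show ?thesis using assms unfolding closedin_def by auto
qed



definition pos :: "'a topology \<Rightarrow> 'a \<Rightarrow> 'a \<Rightarrow> real \<Rightarrow> 'a set \<Rightarrow> real" where
  "pos Y p q r F = (if closedin Y F then (if p \<in> F then 1 else if q \<in> F then r else 0) else 0)"

definition gmin :: "'a topology \<Rightarrow> 'a \<Rightarrow> 'a \<Rightarrow> 'a set \<Rightarrow> real" where
  "gmin Y p q F = (if closedin Y F \<and> p \<in> F \<and> q \<in> F then 1 else 0)"

lemma open_minus_pt:
  assumes "\<forall>x\<in>topspace Y. closedin Y {x}" "x \<in> topspace Y"
  shows "openin Y (topspace Y - {x})"
  using assms by (simp add: openin_diff)

lemma pos_cap:
  assumes T1: "\<forall>x\<in>topspace Y. closedin Y {x}" and pq: "p \<in> topspace Y" "q \<in> topspace Y"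
    and r: "0 \<le> r" "r \<le> 1"
  shows "pos Y p q r \<in> caps Y"
  unfolding caps_def capacity_def mem_Collect_eq
proof (intro conjI allI impI)
  fix F a assume A: "closedin Y F \<and> pos Y p q r F < a"
  then have cF: "closedin Y F" and lt: "pos Y p q r F < a" by auto
  have Fs: "F \<subseteq> topspace Y" using cF closedin_subset by auto
  show "\<exists>W. openin Y W \<and> F \<subseteq> W \<and> (\<forall>B. closedin Y B \<and> B \<subseteq> W \<longrightarrow> pos Y p q r B < a)"
  proof (cases "a > 1")
    case True
    then show ?thesis using r Fs
      by (intro exI[of _ "topspace Y"]) (auto simp: pos_def)
  next
    case False
    then have pF: "p \<notin> F" using lt cF by (auto simp: pos_def split: if_splits)
    show ?thesis
    proof (cases "q \<in> F")
      case True
      then have "r < a" using lt cF pF by (auto simp: pos_def)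
      then show ?thesis using pF Fs r open_minus_pt[OF T1 pq(1)]
        by (intro exI[of _ "topspace Y - {p}"]) (auto simp: pos_def)
    next
      case qF: False
      have "0 < a" using lt cF pF qF by (auto simp: pos_def)
      have cl: "closedin Y {p, q}" using T1 pq
        by (metis closedin_Un insert_is_Un)
      have "openin Y (topspace Y - {p,q})" using cl by (simp add: openin_diff)
      then show ?thesis using pF qF Fs \<open>0 < a\<close>
        by (intro exI[of _ "topspace Y - {p,q}"]) (auto simp: pos_def)
    qed
  qed
qed (use pq r in \<open>auto simp: pos_def\<close>)

lemma gmin_cap:
  assumes T1: "\<forall>x\<in>topspace Y. closedin Y {x}" and pq: "p \<in> topspace Y" "q \<in> topspace Y"
  shows "gmin Y p q \<in> caps Y"
  unfolding caps_def capacity_def mem_Collect_eq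
proof (intro conjI allI impI)
  fix F a assume A: "closedin Y F \<and> gmin Y p q F < a"
  then have cF: "closedin Y F" and lt: "gmin Y p q F < a" by auto
  have Fs: "F \<subseteq> topspace Y" using cF closedin_subset by auto
  show "\<exists>W. openin Y W \<and> F \<subseteq> W \<and> (\<forall>B. closedin Y B \<and> B \<subseteq> W \<longrightarrow> gmin Y p q B < a)"
  proof (cases "a > 1")
    case True
    then show ?thesis using Fs
      by (intro exI[of _ "topspace Y"]) (auto simp: gmin_def)
  next
    case False
    then have "p \<notin> F \<or> q \<notin> F" "0 < a" using lt cF by (auto simp: gmin_def split: if_splits)
    then show ?thesis
    proof (elim disjE)
      assume "p \<notin> F" then show ?thesis using Fs \<open>0 < a\<close> open_minus_pt[OF T1 pq(1)]
        by (intro exI[of _ "topspace Y - {p}"]) (auto simp: gmin_def)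
    next
      assume "q \<notin> F" then show ?thesis using Fs \<open>0 < a\<close> open_minus_pt[OF T1 pq(2)]
        by (intro exI[of _ "topspace Y - {q}"]) (auto simp: gmin_def)
    qed
  qed
qed (use pq in \<open>auto simp: gmin_def\<close>)



lemma mu_set_ne: "{C (cap_level Y F t) * t | t. t \<in> {0<..1}} \<noteq> {}"
  by (auto intro: exI[of _ 1])

lemma mu_set_bdd:
  assumes "C \<in> caps (cap_top Y)"
  shows "bdd_above {C (cap_level Y F t) * t | t. t \<in> {0<..1}}"
proof (rule bdd_aboveI[of _ 1], clarify)
  fix t :: real assume "t \<in> {0<..1}"
  moreover have "C (cap_level Y F t) \<le> 1" "0 \<le> C (cap_level Y F t)"
    using cap_le1[OF assms] cap_ge0[OF assms] by auto
  ultimately show "C (cap_level Y F t) * t \<le> 1"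
    by (simp add: mult_le_one)
qed

lemma mu_upper:
  assumes "C \<in> caps (cap_top Y)" "closedin Y F" "t \<in> {0<..1}"
  shows "C (cap_level Y F t) * t \<le> mu_bullet Y C F"
proof -
  have "C (cap_level Y F t) * t \<le> Sup {C (cap_level Y F t) * t | t. t \<in> {0<..1}}"
  proof (rule cSup_upper)
    show "bdd_above {C (cap_level Y F t) * t | t. t \<in> {0<..1}}" by (rule mu_set_bdd[OF assms(1)])
  qed (use assms(3) in blast)
  then show ?thesis unfolding mu_bullet_def using assms(2) by simp
qed

lemma mu_least:
  assumes "closedin Y F" "\<And>t. t \<in> {0<..1} \<Longrightarrow> C (cap_level Y F t) * t \<le> b"
  shows "mu_bullet Y C F \<le> b"
proof -
  have "Sup {C (cap_level Y F t) * t | t. t \<in> {0<..1}} \<le> b"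
    by (rule cSup_least[OF mu_set_ne]) (use assms(2) in blast)
  then show ?thesis unfolding mu_bullet_def using assms(1) by simp
qed

lemma mu_ge0:
  assumes "C \<in> caps (cap_top Y)"
  shows "0 \<le> mu_bullet Y C F"
proof (cases "closedin Y F")
  case True
  have "0 \<le> C (cap_level Y F 1) * 1" using cap_ge0[OF assms] by simp
  also have "\<dots> \<le> mu_bullet Y C F" by (rule mu_upper[OF assms True]) simp
  finally show ?thesis .
qed (simp add: mu_bullet_def)

lemma mu_le1:
  assumes "C \<in> caps (cap_top Y)"
  shows "mu_bullet Y C F \<le> 1"
proof (cases "closedin Y F")
  case True
  show ?thesis
  proof (rule mu_least[OF True])
    fix t :: real assume "t \<in> {0<..1}"
    moreover have "C (cap_level Y F t) \<le> 1" "0 \<le> C (cap_level Y F t)"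
      using cap_le1[OF assms] cap_ge0[OF assms] by auto
    ultimately show "C (cap_level Y F t) * t \<le> 1"
      by (simp add: mult_le_one)
  qed
qed (simp add: mu_bullet_def)

lemma mu_mono:
  assumes "C \<in> caps (cap_top Y)" "closedin Y F" "closedin Y G" "F \<subseteq> G"
  shows "mu_bullet Y C F \<le> mu_bullet Y C G"
proof (rule mu_least[OF assms(2)])
  fix t :: real assume t: "t \<in> {0<..1}"
  have "cap_level Y F t \<subseteq> cap_level Y G t"
  proof
    fix c assume "c \<in> cap_level Y F t"
    then have "c \<in> caps Y" "t \<le> c F" unfolding cap_level_def by auto
    moreover have "c F \<le> c G" using capD(6)[OF \<open>c \<in> caps Y\<close> assms(2-4)] .
    ultimately show "c \<in> cap_level Y G t" unfolding cap_level_def by auto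
  qed
  then have "C (cap_level Y F t) \<le> C (cap_level Y G t)"
    using capD(6)[OF assms(1)] level_closed[OF assms(2), of t] level_closed[OF assms(3), of t] t by auto
  then have "C (cap_level Y F t) * t \<le> C (cap_level Y G t) * t"
    using t by (auto intro: mult_right_mono)
  also have "\<dots> \<le> mu_bullet Y C G" using mu_upper[OF assms(1,3) t] .
  finally show "C (cap_level Y F t) * t \<le> mu_bullet Y C G" .
qed

lemma mu_cap:
  assumes disc: "\<And>F. closedin Y F \<Longrightarrow> openin Y F" and C: "C \<in> caps (cap_top Y)"
  shows "mu_bullet Y C \<in> caps Y"
  unfolding caps_def capacity_def mem_Collect_eq
proof (intro conjI allI impI)
  fix S assume "\<not> closedin Y S" then show "mu_bullet Y C S = 0" by (simp add: mu_bullet_def)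
next
  fix F assume "closedin Y F" then show "0 \<le> mu_bullet Y C F" "mu_bullet Y C F \<le> 1"
    using mu_ge0[OF C] mu_le1[OF C] by auto
next
  have lv: "t \<in> {0<..1} \<Longrightarrow> cap_level Y (topspace Y) t = caps Y" for t
    unfolding cap_level_def by (auto dest: capD(4))
  have C1: "C (caps Y) = 1" using capD(4)[OF C] by simp
  have "mu_bullet Y C (topspace Y) \<le> 1" by (rule mu_le1[OF C])
  moreover have "C (cap_level Y (topspace Y) 1) * 1 \<le> mu_bullet Y C (topspace Y)"
    by (rule mu_upper[OF C]) auto
  ultimately show "mu_bullet Y C (topspace Y) = 1" using lv[of 1] C1 by auto
next
  have lv: "t \<in> {0<..1} \<Longrightarrow> cap_level Y {} t = {}" for t
    unfolding cap_level_def by (auto dest: capD(5))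
  have C0: "C {} = 0" using capD(5)[OF C] by simp
  have "mu_bullet Y C {} \<le> 0" by (rule mu_least) (use lv C0 in auto)
  then show "mu_bullet Y C {} = 0" using mu_ge0[OF C, of "{}"] by auto
next
  fix F G assume "closedin Y F \<and> closedin Y G \<and> F \<subseteq> G"
  then show "mu_bullet Y C F \<le> mu_bullet Y C G" using mu_mono[OF C] by auto
next
  fix F a assume A: "closedin Y F \<and> mu_bullet Y C F < a"
  show "\<exists>W. openin Y W \<and> F \<subseteq> W \<and> (\<forall>B. closedin Y B \<and> B \<subseteq> W \<longrightarrow> mu_bullet Y C B < a)"
  proof (intro exI[of _ F] conjI allI impI)
    show "openin Y F" using A disc by auto
    fix B assume "closedin Y B \<and> B \<subseteq> F"
    then have "mu_bullet Y C B \<le> mu_bullet Y C F" using mu_mono[OF C _ _ ] A by auto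
    then show "mu_bullet Y C B < a" using A by auto
  qed auto
qed



lemma mu_open:
  assumes F: "closedin Y F" and C: "C \<in> caps (cap_top Y)" and lt: "mu_bullet Y C F < u"
  shows "\<exists>U. openin (cap_top (cap_top Y)) U \<and> C \<in> U \<and> (\<forall>D\<in>U. mu_bullet Y D F < u)"
proof -
  define L where "L t = cap_level Y F t" for t
  define s where "s = mu_bullet Y C F"
  define h where "h = (u - s) / 3"
  have s0: "0 \<le> s" unfolding s_def by (rule mu_ge0[OF C])
  have h0: "0 < h" using lt unfolding h_def s_def by auto
  define N where "N = nat \<lceil>1/h\<rceil>"
  define K where "K = {k \<in> {1..N}. real k * h \<le> 1}"
  define b where "b k = C (L (real k * h)) + h" for k
  define V where "V k = (if b k \<le> 1 then {D \<in> caps (cap_top Y). D (L (real k * h)) < b k}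
                          else caps (cap_top Y))" for k
  define U where "U = caps (cap_top Y) \<inter> \<Inter>(V ` K)"
  have Lcl: "closedin (cap_top Y) (L t)" if "0 \<le> t" "t \<le> 1" for t
    unfolding L_def by (rule level_closed[OF F that])
  have "openin (cap_top (cap_top Y)) U"
    unfolding U_def
  proof (rule openin_Int_Inter)
    show "finite (V ` K)" unfolding K_def by auto
    show "openin (cap_top (cap_top Y)) (caps (cap_top Y))" by (rule open_caps)
    fix W assume "W \<in> V ` K"
    then obtain k where k: "k \<in> K" "W = V k" by auto
    have kh: "0 \<le> real k * h" "real k * h \<le> 1" using k h0 unfolding K_def by auto
    have "0 \<le> C (L (real k * h))" by (rule cap_ge0[OF C])
    then have "0 \<le> b k" unfolding b_def using h0 by simp
    then show "openin (cap_top (cap_top Y)) W"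
      using k(2) open_lt[OF Lcl[OF kh], of "b k"] open_caps unfolding V_def by auto
  qed
  moreover have "C \<in> U" unfolding U_def V_def b_def using C h0 by auto
  moreover have "mu_bullet Y D F < u" if D: "D \<in> U" for D
  proof -
    have Dc: "D \<in> caps (cap_top Y)" using D unfolding U_def by auto
    have "mu_bullet Y D F \<le> s + 2 * h"
    proof (rule mu_least[OF F])
      fix t :: real assume t: "t \<in> {0<..1}"
      have D1: "D (cap_level Y F t) \<le> 1" by (rule cap_le1[OF Dc])
      show "D (cap_level Y F t) * t \<le> s + 2 * h"
      proof (cases "t < h")
        case True
        have "D (cap_level Y F t) * t \<le> 1 * t" using D1 t by (intro mult_right_mono) auto
        then show ?thesis using True s0 h0 by auto
      next
        case False
        define k where "k = nat \<lfloor>t/h\<rfloor>"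
        have fl: "1 \<le> \<lfloor>t/h\<rfloor>" using False h0 by (simp add: le_floor_iff)
        have rk: "real k = \<lfloor>t/h\<rfloor>" unfolding k_def using fl by auto
        have k1: "real k * h \<le> t" using floor_divide_lower[OF h0, of t] unfolding rk .
        have k2: "t < real k * h + h" using floor_divide_upper[OF h0, of t] unfolding rk[symmetric]
          by (simp add: algebra_simps)
        have kpos: "0 < real k * h" using rk fl h0 by auto
        have "real k \<le> 1/h" using k1 t h0 by (simp add: le_divide_eq)
        also have "1/h \<le> of_int \<lceil>1/h\<rceil>" by (rule le_of_int_ceiling)
        finally have "of_int (int k) \<le> (of_int \<lceil>1/h\<rceil> :: real)" by simp
        then have "int k \<le> \<lceil>1/h\<rceil>" by (simp only: of_int_le_iff)
        then have "k \<le> N" unfolding N_def by (simp add: le_nat_iff)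
        moreover have "1 \<le> real k" using rk fl by simp
        then have "1 \<le> k" by simp
        ultimately have kK: "k \<in> K" unfolding K_def using k1 t by auto
        have sub: "cap_level Y F t \<subseteq> L (real k * h)" unfolding L_def cap_level_def using k1 by auto
        have c1: "closedin (cap_top Y) (L t)" using Lcl[of t] t by auto
        have c2: "closedin (cap_top Y) (L (real k * h))" using Lcl[of "real k * h"] kpos k1 t by auto
        have "D (cap_level Y F t) \<le> D (L (real k * h))"
          using capD(6)[OF Dc c1 c2] sub unfolding L_def by auto
        also have "\<dots> \<le> b k"
        proof -
          have "D \<in> V k" using D kK unfolding U_def by auto
          then show ?thesis using cap_le1[OF Dc, of "L (real k * h)"] unfolding V_def
            by (auto split: if_splits)
        qed
        finally have Db: "D (cap_level Y F t) \<le> b k" .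
        have Cge: "0 \<le> C (L (real k * h))" "C (L (real k * h)) \<le> 1"
          using cap_ge0[OF C] cap_le1[OF C] by auto
        have Cs: "C (L (real k * h)) * (real k * h) \<le> s"
          unfolding s_def L_def by (rule mu_upper[OF C F]) (use kpos k1 t in auto)
        have "D (cap_level Y F t) * t \<le> b k * t" using Db t by (intro mult_right_mono) auto
        also have "\<dots> = C (L (real k * h)) * t + h * t" unfolding b_def by (simp add: algebra_simps)
        also have "\<dots> \<le> C (L (real k * h)) * (real k * h + h) + h * 1"
          using Cge k2 t h0 by (intro add_mono mult_left_mono) auto
        also have "\<dots> = C (L (real k * h)) * (real k * h) + C (L (real k * h)) * h + h"
          by (simp add: algebra_simps)
        also have "\<dots> \<le> s + 1 * h + h"
          using Cs Cge h0 by (intro add_mono mult_right_mono) auto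
        finally show ?thesis by simp
      qed
    qed
    moreover have "s + 2 * h < u" using h0 unfolding h_def by (simp add: field_simps)
    ultimately show ?thesis by linarith
  qed
  ultimately show ?thesis by blast
qed

lemma pre_closed:
  assumes F: "closedin Y F"
  shows "closedin (cap_top (cap_top Y)) {C \<in> caps (cap_top Y). u \<le> mu_bullet Y C F}"
proof -
  have eq: "topspace (cap_top (cap_top Y)) - {C \<in> caps (cap_top Y). u \<le> mu_bullet Y C F}
        = {C \<in> caps (cap_top Y). mu_bullet Y C F < u}" by auto
  have "openin (cap_top (cap_top Y)) {C \<in> caps (cap_top Y). mu_bullet Y C F < u}"
  proof (subst openin_subopen, intro ballI)
    fix C assume C: "C \<in> {C \<in> caps (cap_top Y). mu_bullet Y C F < u}"
    then obtain U where U: "openin (cap_top (cap_top Y)) U" "C \<in> U" "\<forall>D\<in>U. mu_bullet Y D F < u"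
      using mu_open[OF F] by blast
    show "\<exists>T. openin (cap_top (cap_top Y)) T \<and> C \<in> T \<and> T \<subseteq> {C \<in> caps (cap_top Y). mu_bullet Y C F < u}"
      using U C open_caps[of "cap_top Y"]
      by (intro exI[of _ "U \<inter> caps (cap_top Y)"]) auto
  qed
  then show ?thesis unfolding closedin_def eq[symmetric] by auto
qed



definition XX :: "nat topology" where "XX = discrete_topology {0,1}"

definition kap :: "real \<Rightarrow> real \<Rightarrow> nat set \<Rightarrow> real" where
  "kap x y S = (if S \<subseteq> {0,1} then (if S = {0,1} then 1 else if S = {0} then x
                 else if S = {1} then y else 0) else 0)"

lemma kap_simps[simp]: "kap x y {} = 0" "kap x y {0} = x" "kap x y {1} = y" "kap x y {0,1} = 1"
   "kap x y {Suc 0} = y" "kap x y {0, Suc 0} = 1"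
  by (auto simp: kap_def)

lemma sub01: "S \<subseteq> {0::nat,1} \<Longrightarrow> S = {} \<or> S = {0} \<or> S = {1} \<or> S = {0,1}"
proof -
  assume a: "S \<subseteq> {0::nat,1}"
  have "S \<in> Pow {0::nat,1}" using a by simp
  also have "Pow {0::nat,1} = {{},{0},{1},{0,1}}" by (simp add: Pow_insert insert_commute)
  finally show ?thesis by simp
qed

lemma kap_cap:
  assumes "0 \<le> x" "x \<le> 1" "0 \<le> y" "y \<le> 1"
  shows "kap x y \<in> caps XX"
  unfolding caps_def capacity_def mem_Collect_eq XX_def closedin_discrete_topology
    openin_discrete_topology topspace_discrete_topology
proof (intro conjI allI impI)
  fix F G :: "nat set" assume A: "F \<subseteq> {0, 1} \<and> G \<subseteq> {0, 1} \<and> F \<subseteq> G"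
  then have "F = {} \<or> F = {0} \<or> F = {1} \<or> F = {0,1}" "G = {} \<or> G = {0} \<or> G = {1} \<or> G = {0,1}"
    using sub01[of F] sub01[of G] by simp_all
  then show "kap x y F \<le> kap x y G" using A assms by (elim disjE) simp_all
next
  fix F :: "nat set" and a assume A: "F \<subseteq> {0, 1} \<and> kap x y F < a"
  then show "\<exists>W\<subseteq>{0, 1}. F \<subseteq> W \<and> (\<forall>B. B \<subseteq> {0, 1} \<and> B \<subseteq> W \<longrightarrow> kap x y B < a)"
  proof (intro exI[of _ F] conjI allI impI)
    fix B assume B: "B \<subseteq> {0, 1} \<and> B \<subseteq> F"
    have "F = {} \<or> F = {0} \<or> F = {1} \<or> F = {0,1}" "B = {} \<or> B = {0} \<or> B = {1} \<or> B = {0,1}"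
      using sub01[of F] sub01[of B] A B by simp_all
    then have "kap x y B \<le> kap x y F" using A B assms by (elim disjE) simp_all
    then show "kap x y B < a" using A by auto
  qed auto
next
  fix F :: "nat set" assume "F \<subseteq> {0,1}"
  then have "F = {} \<or> F = {0} \<or> F = {1} \<or> F = {0,1}" by (rule sub01)
  then show "0 \<le> kap x y F" "kap x y F \<le> 1" using assms by (elim disjE, simp_all)+
qed (auto simp: kap_def)

lemma mu_upper2:
  assumes "\<And>S. 0 \<le> C S" "\<And>S. C S \<le> 1" "closedin Y F" "t \<in> {0<..1}"
  shows "C (cap_level Y F t) * t \<le> mu_bullet Y C F"
proof -
  have bdd: "bdd_above {C (cap_level Y F t) * t | t. t \<in> {0<..1}}"
  proof (rule bdd_aboveI[of _ 1], clarify)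
    fix t :: real assume "t \<in> {0<..1}"
    then show "C (cap_level Y F t) * t \<le> 1" using assms(1,2)[of "cap_level Y F t"]
      by (simp add: mult_le_one)
  qed
  have "C (cap_level Y F t) * t \<le> Sup {C (cap_level Y F t) * t | t. t \<in> {0<..1}}"
    by (rule cSup_upper[OF _ bdd]) (use assms(4) in blast)
  then show ?thesis unfolding mu_bullet_def using assms(3) by simp
qed


lemma XX_closed[simp]: "closedin XX S \<longleftrightarrow> S \<subseteq> {0,1}"
  unfolding XX_def by simp

lemma XX_disc: "closedin XX F \<Longrightarrow> openin XX F"
  unfolding XX_def by simp

lemma T1_cap: "\<forall>x\<in>topspace (cap_top Y). closedin (cap_top Y) {x}"
  using singleton_closed by auto

definition AA :: "real \<Rightarrow> (nat set \<Rightarrow> real) set" where "AA u = cap_level XX {0} u"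

lemma AA_closed: "0 \<le> u \<Longrightarrow> u \<le> 1 \<Longrightarrow> closedin (cap_top XX) (AA u)"
  unfolding AA_def by (rule level_closed) auto

definition "cc = kap (1/2) 0"
definition "pp = kap 0 0"
definition "qq = kap 1 0"

lemma cc_caps: "cc \<in> caps XX" unfolding cc_def by (rule kap_cap) auto
lemma pp_caps: "pp \<in> caps XX" unfolding pp_def by (rule kap_cap) auto
lemma qq_caps: "qq \<in> caps XX" unfolding qq_def by (rule kap_cap) auto

lemma cc_AA: "cc \<in> AA u \<longleftrightarrow> u \<le> 1/2"
  using cc_caps unfolding AA_def cap_level_def cc_def by auto
lemma pp_AA: "pp \<in> AA u \<longleftrightarrow> u \<le> 0"
  using pp_caps unfolding AA_def cap_level_def pp_def by auto
lemma qq_AA: "qq \<in> AA u \<longleftrightarrow> u \<le> 1"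
  using qq_caps unfolding AA_def cap_level_def qq_def by auto

definition "C1 = pos (cap_top XX) cc cc 0"
definition "C2 = pos (cap_top XX) pp qq (1/2)"

lemma C1_caps: "C1 \<in> caps (cap_top XX)"
  unfolding C1_def by (rule pos_cap[OF T1_cap]) (use cc_caps in auto)
lemma C2_caps: "C2 \<in> caps (cap_top XX)"
  unfolding C2_def by (rule pos_cap[OF T1_cap]) (use pp_caps qq_caps in auto)

lemma C1_AA: "0 < u \<Longrightarrow> u \<le> 1 \<Longrightarrow> C1 (AA u) = (if u \<le> 1/2 then 1 else 0)"
  unfolding C1_def pos_def using AA_closed[of u] cc_AA[of u] by auto
lemma C2_AA: "0 < u \<Longrightarrow> u \<le> 1 \<Longrightarrow> C2 (AA u) = 1/2"
  unfolding C2_def pos_def using AA_closed[of u] pp_AA[of u] qq_AA[of u] by auto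

definition "GG = gmin (cap_top (cap_top XX)) C1 C2"

lemma GG_caps: "GG \<in> caps (cap_top (cap_top XX))"
  unfolding GG_def by (rule gmin_cap[OF T1_cap]) (use C1_caps C2_caps in auto)

lemma compactum_XX: "compactum XX"
  unfolding compactum_def XX_def
  by (simp add: compact_space_discrete_topology Hausdorff_space_discrete_topology)

lemma LHS_le: "mu_bullet XX (mu_bullet (cap_top XX) GG) {0} \<le> 1/4"
proof (rule mu_least)
  show "closedin XX {0}" by simp
  fix u :: real assume u: "u \<in> {0<..1}"
  let ?D = "mu_bullet (cap_top XX) GG"
  have Dle: "?D (AA u) \<le> (if u \<le> 1/2 then 1/2 else 0)"
  proof (rule mu_least)
    show "closedin (cap_top XX) (AA u)" using AA_closed u by auto
    fix t :: real assume t: "t \<in> {0<..1}"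
    have cl: "closedin (cap_top (cap_top XX)) (cap_level (cap_top XX) (AA u) t)"
      using level_closed[of "cap_top XX" "AA u" t] AA_closed u t by auto
    have "GG (cap_level (cap_top XX) (AA u) t) = (if u \<le> 1/2 \<and> t \<le> 1/2 then 1 else 0)"
      unfolding GG_def gmin_def cap_level_def using cl C1_caps C2_caps C1_AA[of u] C2_AA[of u] u t
      by (auto simp: cap_level_def)
    then show "GG (cap_level (cap_top XX) (AA u) t) * t \<le> (if u \<le> 1/2 then 1/2 else 0)"
      using t by auto
  qed
  have D0: "0 \<le> ?D (AA u)" by (rule mu_ge0[OF GG_caps])
  show "?D (cap_level XX {0} u) * u \<le> 1/4"
  proof (cases "u \<le> 1/2")
    case True
    then have "?D (AA u) * u \<le> 1/2 * (1/2)" using Dle D0 u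
      by (intro mult_mono) auto
    then show ?thesis unfolding AA_def by simp
  next
    case False
    then have "?D (AA u) * u \<le> 0 * u" using Dle u by (intro mult_right_mono) auto
    then show ?thesis unfolding AA_def by simp
  qed
qed

lemma mu_C1: "1/2 \<le> mu_bullet XX C1 {0}"
proof -
  have "C1 (AA (1/2)) * (1/2) \<le> mu_bullet XX C1 {0}"
    unfolding AA_def by (rule mu_upper[OF C1_caps]) auto
  then show ?thesis using C1_AA[of "1/2"] by simp
qed

lemma mu_C2: "1/2 \<le> mu_bullet XX C2 {0}"
proof -
  have "C2 (AA 1) * 1 \<le> mu_bullet XX C2 {0}"
    unfolding AA_def by (rule mu_upper[OF C2_caps]) auto
  then show ?thesis using C2_AA[of 1] by simp
qed

lemma RHS_ge: "1/2 \<le> mu_bullet XX (cap_map (cap_top (cap_top XX)) (cap_top XX) (mu_bullet XX) GG) {0}"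
proof -
  let ?N = "cap_map (cap_top (cap_top XX)) (cap_top XX) (mu_bullet XX) GG"
  have N0: "0 \<le> ?N S" for S
    unfolding cap_map_def using cap_ge0[OF GG_caps] by auto
  have N1: "?N S \<le> 1" for S
    unfolding cap_map_def using cap_le1[OF GG_caps] by auto
  define P where "P = {C \<in> caps (cap_top XX). 1/2 \<le> mu_bullet XX C {0}}"
  have Peq: "mu_bullet XX -` AA (1/2) \<inter> topspace (cap_top (cap_top XX)) = P"
  proof (rule set_eqI)
    fix C
    show "C \<in> mu_bullet XX -` AA (1/2) \<inter> topspace (cap_top (cap_top XX)) \<longleftrightarrow> C \<in> P"
    proof
      assume "C \<in> mu_bullet XX -` AA (1/2) \<inter> topspace (cap_top (cap_top XX))"
      then show "C \<in> P" unfolding P_def AA_def cap_level_def by simp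
    next
      assume C: "C \<in> P"
      have Cc: "C \<in> caps (cap_top XX)" using C unfolding P_def by simp
      have "mu_bullet XX C \<in> caps XX" by (rule mu_cap[OF XX_disc Cc])
      then show "C \<in> mu_bullet XX -` AA (1/2) \<inter> topspace (cap_top (cap_top XX))"
        using C unfolding P_def AA_def cap_level_def by simp
    qed
  qed
  have Pcl: "closedin (cap_top (cap_top XX)) P"
    unfolding P_def by (rule pre_closed) simp
  have "C1 \<in> P" "C2 \<in> P" unfolding P_def using C1_caps C2_caps mu_C1 mu_C2 by auto
  then have "GG P = 1" unfolding GG_def gmin_def using Pcl by auto
  then have "?N (AA (1/2)) = 1"
    unfolding cap_map_def using AA_closed[of "1/2"] Peq by auto
  moreover have "?N (cap_level XX {0} (1/2)) * (1/2) \<le> mu_bullet XX ?N {0}"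
    by (rule mu_upper2[OF N0 N1]) auto
  ultimately show ?thesis unfolding AA_def by simp
qed

theorem proposition1:
  shows "\<exists>(X :: nat topology) G.
    compactum X \<and> G \<in> caps (cap_top (cap_top X)) \<and>
    mu_bullet X (mu_bullet (cap_top X) G)
      \<noteq> mu_bullet X (cap_map (cap_top (cap_top X)) (cap_top X) (mu_bullet X) G)"
proof (intro exI conjI)
  show "compactum XX" by (rule compactum_XX)
  show "GG \<in> caps (cap_top (cap_top XX))" by (rule GG_caps)
  show "mu_bullet XX (mu_bullet (cap_top XX) GG)
      \<noteq> mu_bullet XX (cap_map (cap_top (cap_top XX)) (cap_top XX) (mu_bullet XX) GG)"
  proof
    assume "mu_bullet XX (mu_bullet (cap_top XX) GG)
      = mu_bullet XX (cap_map (cap_top (cap_top XX)) (cap_top XX) (mu_bullet XX) GG)"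
    then have "mu_bullet XX (mu_bullet (cap_top XX) GG) {0}
      = mu_bullet XX (cap_map (cap_top (cap_top XX)) (cap_top XX) (mu_bullet XX) GG) {0}" by simp
    then show False using LHS_le RHS_ge by linarith
  qed
qed


end
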